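(* The function $e(\lambda)$ is strictly increasing on $(\lambda^*,\infty)$; in fact $e'(\lambda)>0$ for all $\lambda>\lambda^*$.
   Context: Standing setup. Let $\gamma>0$; let $a_1,\dots,a_p>0$ with weights $\omega_i>0$, $\sum_i\omega_i=1$, and $b_1,\dots,b_n>0$ with weights $\pi_j>0$, $\sum_j\pi_j=1$. Let $\mu$ be the limiting spectral distribution of $\mathbf{N}\mathbf{N}^T$ where $\mathbf{N}=\mathbf{A}^{1/2}\mathbf{G}\mathbf{B}^{1/2}$ is $k\times l$, $\mathbf{G}$ has iid mean-zero entries of variance $1/l$, $k/l\to\gamma$, and the spectral distributions of $\mathbf{A},\mathbf{B}$ converge to $\nu=\sum_i\omega_i\delta_{a_i}$ and $\underline{\nu}=\sum_j\pi_j\delta_{b_j}$. $\mu$ is a compactly supported probability measure on $[0,\infty)$; $\lambda^*>0$ is the right endpoint of its support, and $s(\lambda)=\int\frac{d\mu(t)}{t-\lambda}$ for $\lambda>\lambda^*$. Define $G(e)=\sum_{j=1}^n\frac{b_j\pi_j}{1+\gamma b_j e}$ and $F(\lambda,e)=e-\sum_{i=1}^p\frac{a_i\omega_i}{a_iG(e)-\lambda}$. It is known (master equations) that there is a smooth real function $e(\lambda)$ on $(\lambda^*,\infty)$, never equal to a pole $-1/(\gamma b_j)$ of $G$ and with $a_iG(e(\lambda))\ne\lambda$, satisfying $s(\lambda)=\sum_{i=1}^p\frac{\omega_i}{a_iG(e(\lambda))-\lambda}$ and $F(\lambda,e(\lambda))=0$. *)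

theory Defs
  imports "HOL-Probability.Probability"
begin

definition msupport :: "real measure \<Rightarrow> real set" where
  "msupport M = {x. \<forall>r>0. emeasure M (ball x r) > 0}"

definition stieltjes :: "real measure \<Rightarrow> real \<Rightarrow> real" where
  "stieltjes M l = (\<integral>t. 1 / (t - l) \<partial>M)"

definition Gfun :: "real \<Rightarrow> nat \<Rightarrow> (nat \<Rightarrow> real) \<Rightarrow> (nat \<Rightarrow> real) \<Rightarrow> real \<Rightarrow> real" where
  "Gfun \<gamma> n b \<pi> e = (\<Sum>j<n. b j * \<pi> j / (1 + \<gamma> * b j * e))"

definition Ffun :: "real \<Rightarrow> nat \<Rightarrow> (nat \<Rightarrow> real) \<Rightarrow> (nat \<Rightarrow> real) \<Rightarrow> nat \<Rightarrow> (nat \<Rightarrow> real) \<Rightarrow> (nat \<Rightarrow> real)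
    \<Rightarrow> real \<Rightarrow> real \<Rightarrow> real" where
  "Ffun \<gamma> p a \<omega> n b \<pi> l e = e - (\<Sum>i<p. a i * \<omega> i / (a i * Gfun \<gamma> n b \<pi> e - l))"

end

theory Submission imports Defs begin
lemma supp_AE:
  fixes M :: "real measure"
  assumes "sets M = sets borel"
  shows "AE t in M. t \<in> msupport M"
proof -
  define I where "I = {q::rat\<times>rat. emeasure M {real_of_rat (fst q)<..<real_of_rat (snd q)} = 0}"
  define N where "N = (\<Union>q\<in>I. {real_of_rat (fst q)<..<real_of_rat (snd q)})"
  have "N \<in> null_sets M"
    unfolding N_def
    by (rule null_sets_UN') (auto simp: I_def null_sets_def assms)
  moreover have "{t \<in> space M. \<not> t \<in> msupport M} \<subseteq> N"
  proof
    fix t assume "t \<in> {t \<in> space M. \<not> t \<in> msupport M}"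
    then obtain r where r: "r > 0" "emeasure M (ball t r) = 0"
      by (auto simp: msupport_def not_less)
    obtain q1 where q1: "t - r < real_of_rat q1" "real_of_rat q1 < t"
      using of_rat_dense[of "t - r" t] r by auto
    obtain q2 where q2: "t < real_of_rat q2" "real_of_rat q2 < t + r"
      using of_rat_dense[of t "t + r"] r by auto
    have sub: "{real_of_rat q1<..<real_of_rat q2} \<subseteq> ball t r"
      using q1 q2 by (auto simp: ball_def dist_real_def)
    have "emeasure M {real_of_rat q1<..<real_of_rat q2} \<le> emeasure M (ball t r)"
      by (rule emeasure_mono[OF sub]) (simp add: assms)
    then have "(q1,q2) \<in> I" using r by (simp add: I_def)
    then show "t \<in> N" using q1 q2 unfolding N_def by (intro UN_I[of "(q1,q2)"]) auto
  qed
  ultimately show ?thesis by (rule AE_I')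
qed
lemma deriv_nonneg_of_right_mono:
  fixes f :: "real \<Rightarrow> real"
  assumes d: "(f has_real_derivative D) (at x)" and m: "\<And>y. y > x \<Longrightarrow> f x \<le> f y"
  shows "D \<ge> 0"
proof -
  have "((\<lambda>y. (f y - f x) / (y - x)) \<longlongrightarrow> D) (at x)"
    using d by (simp add: has_field_derivative_iff)
  then have lim: "((\<lambda>y. (f y - f x) / (y - x)) \<longlongrightarrow> D) (at_right x)"
    by (rule filterlim_mono) (auto simp: at_within_le_at)
  show ?thesis
  proof (rule tendsto_lowerbound[OF lim])
    show "\<forall>\<^sub>F y in at_right x. 0 \<le> (f y - f x) / (y - x)"
      by (rule eventually_at_rightI[of x "x+1"]) (use m in auto)
  qed simp
qed

lemma phi_deriv:
  fixes \<gamma> :: real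
  assumes "\<forall>j<n. 1 + \<gamma> * b j * E \<noteq> 0"
  shows "((\<lambda>y. y * Gfun \<gamma> n b \<pi> y) has_real_derivative (\<Sum>j<n. b j * \<pi> j / (1 + \<gamma> * b j * E)^2)) (at E)"
proof -
  have eq: "(\<lambda>y. y * Gfun \<gamma> n b \<pi> y) = (\<lambda>y. \<Sum>j<n. b j * \<pi> j * y / (1 + \<gamma> * b j * y))"
    unfolding Gfun_def by (intro ext) (simp add: sum_distrib_left algebra_simps)
  have "((\<lambda>y. \<Sum>j<n. b j * \<pi> j * y / (1 + \<gamma> * b j * y)) has_real_derivative (\<Sum>j<n. b j * \<pi> j / (1 + \<gamma> * b j * E)^2)) (at E)"
  proof (rule DERIV_sum)
    fix j assume j: "j \<in> {..<n}"
    then have nz: "1 + \<gamma> * b j * E \<noteq> 0" using assms by auto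
    have "((\<lambda>y. b j * \<pi> j * y / (1 + \<gamma> * b j * y)) has_real_derivative
       ((b j * \<pi> j) * (1 + \<gamma> * b j * E) - (b j * \<pi> j * E) * (\<gamma> * b j)) / (1 + \<gamma> * b j * E)^2) (at E)"
      using nz by (intro DERIV_divide derivative_eq_intros refl) (auto simp: power2_eq_square)
    moreover have "((b j * \<pi> j) * (1 + \<gamma> * b j * E) - (b j * \<pi> j * E) * (\<gamma> * b j)) = b j * \<pi> j"
      by (simp add: algebra_simps)
    ultimately show "((\<lambda>y. b j * \<pi> j * y / (1 + \<gamma> * b j * y)) has_real_derivative b j * \<pi> j / (1 + \<gamma> * b j * E)^2) (at E)"
      by simp
  qed
  then show ?thesis unfolding eq .
qed

lemma Gfun_deriv:
  fixes \<gamma> :: real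
  assumes "\<forall>j<n. 1 + \<gamma> * b j * E \<noteq> 0"
  shows "Gfun \<gamma> n b \<pi> differentiable (at E)"
  unfolding Gfun_def
  using assms by (intro differentiable_sum ballI differentiable_divide derivative_intros) auto
theorem proposition3p7:
  fixes \<gamma> :: real and p n :: nat and a \<omega> b \<pi> :: "nat \<Rightarrow> real"
    and \<mu> :: "real measure" and lstar :: real and e :: "real \<Rightarrow> real"
  assumes gamma_pos: "\<gamma> > 0"
    and a_pos: "\<forall>i<p. a i > 0" and \<omega>_pos: "\<forall>i<p. \<omega> i > 0" and \<omega>_sum: "(\<Sum>i<p. \<omega> i) = 1"
    and b_pos: "\<forall>j<n. b j > 0" and \<pi>_pos: "\<forall>j<n. \<pi> j > 0" and \<pi>_sum: "(\<Sum>j<n. \<pi> j) = 1"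
    and mu_prob: "prob_space \<mu>" and mu_borel: "sets \<mu> = sets borel"
    and mu_compact: "compact (msupport \<mu>)"
    and mu_nonneg: "msupport \<mu> \<subseteq> {0..}"
    and lstar_def: "lstar = Sup (msupport \<mu>)"
    and lstar_pos: "lstar > 0"
    and e_smooth: "\<forall>k. \<forall>x>lstar. (deriv ^^ k) e differentiable (at x)"
    and e_no_pole: "\<forall>x>lstar. \<forall>j<n. e x \<noteq> - 1 / (\<gamma> * b j)"
    and e_no_sing: "\<forall>x>lstar. \<forall>i<p. a i * Gfun \<gamma> n b \<pi> (e x) \<noteq> x"
    and master_s: "\<forall>x>lstar. stieltjes \<mu> x = (\<Sum>i<p. \<omega> i / (a i * Gfun \<gamma> n b \<pi> (e x) - x))"
    and master_F: "\<forall>x>lstar. Ffun \<gamma> p a \<omega> n b \<pi> x (e x) = 0"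
  shows "strict_mono_on {lstar<..} e \<and> (\<forall>x>lstar. deriv e x > 0)"
proof -
  have p0: "p > 0" using \<omega>_sum by (cases p) auto
  have n0: "n > 0" using \<pi>_sum by (cases n) auto
  interpret P: prob_space \<mu> by (rule mu_prob)
  have AEs: "AE t in \<mu>. t \<in> msupport \<mu>" by (rule supp_AE[OF mu_borel])
  have ne: "msupport \<mu> \<noteq> {}"
  proof
    assume "msupport \<mu> = {}"
    with AEs have "AE t in \<mu>. False" by simp
    then show False by simp
  qed
  have bdd: "bdd_above (msupport \<mu>)"
    using mu_compact by (intro bounded_imp_bdd_above compact_imp_bounded)
  have AEb: "AE t in \<mu>. 0 \<le> t \<and> t \<le> lstar"
    using AEs
  proof (rule AE_mp, intro AE_I2 impI)
    fix t assume "t \<in> msupport \<mu>"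
    then show "0 \<le> t \<and> t \<le> lstar" using mu_nonneg cSup_upper[OF _ bdd] lstar_def by auto
  qed
  have meas: "(\<lambda>t. 1 / (t - x)) \<in> borel_measurable \<mu>" for x :: real
    unfolding measurable_cong_sets[OF mu_borel refl] by measurable
  have integ: "integrable \<mu> (\<lambda>t. 1 / (t - x))" if x: "x > lstar" for x
  proof (rule P.integrable_const_bound[where B="1 / (x - lstar)"])
    show "AE t in \<mu>. norm (1 / (t - x)) \<le> 1 / (x - lstar)"
      using AEb
    proof (rule AE_mp, intro AE_I2 impI)
      fix t assume t: "0 \<le> t \<and> t \<le> lstar"
      have "norm (1 / (t - x)) = 1 / (x - t)" using t x by (simp add: abs_div)
      also have "\<dots> \<le> 1 / (x - lstar)" using t x by (intro divide_left_mono) auto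
      finally show "norm (1 / (t - x)) \<le> 1 / (x - lstar)" .
    qed
  qed (rule meas)
  have wmono: "1 + x * stieltjes \<mu> x \<le> 1 + y * stieltjes \<mu> y" if xy: "lstar < x" "x < y" for x y
  proof -
    have "y * stieltjes \<mu> y - x * stieltjes \<mu> x = (\<integral>t. (y * (1 / (t - y)) - x * (1 / (t - x))) \<partial>\<mu>)"
    proof -
      have i1: "integrable \<mu> (\<lambda>t. y * (1 / (t - y)))" using integ[of y] xy by (intro integrable_mult_right) auto
      have i2: "integrable \<mu> (\<lambda>t. x * (1 / (t - x)))" using integ[of x] xy by (intro integrable_mult_right) auto
      show ?thesis unfolding stieltjes_def Bochner_Integration.integral_diff[OF i1 i2] integral_mult_right_zero ..
    qed
    also have "\<dots> \<ge> 0"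
    proof (rule integral_nonneg_AE)
      show "AE t in \<mu>. 0 \<le> y * (1 / (t - y)) - x * (1 / (t - x))"
        using AEb
      proof (rule AE_mp, intro AE_I2 impI)
        fix t assume t: "0 \<le> t \<and> t \<le> lstar"
        have eq: "y * (1 / (t - y)) - x * (1 / (t - x)) = t * (y - x) / ((y - t) * (x - t))"
          using t xy by (simp add: field_simps)
        show "0 \<le> y * (1 / (t - y)) - x * (1 / (t - x))" unfolding eq using t xy by simp
      qed
    qed
    finally show ?thesis by simp
  qed
  have e_diff: "(e has_real_derivative deriv e x) (at x)" if "x > lstar" for x
    using e_smooth that by (metis DERIV_deriv_iff_real_differentiable funpow_0)
  have nopole: "\<forall>j<n. 1 + \<gamma> * b j * e x \<noteq> 0" if x: "x > lstar" for x
  proof (intro allI impI)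
    fix j assume j: "j < n"
    have "\<gamma> * b j > 0" using gamma_pos b_pos j by simp
    moreover have "e x \<noteq> - 1 / (\<gamma> * b j)" using e_no_pole x j by auto
    ultimately have "e x * (\<gamma> * b j) \<noteq> -1"
      by (metis divide_minus_left nonzero_mult_div_cancel_right order_less_irrefl)
    then show "1 + \<gamma> * b j * e x \<noteq> 0" by (auto simp: algebra_simps)
  qed
  have ident: "e x * Gfun \<gamma> n b \<pi> (e x) = 1 + x * stieltjes \<mu> x" if x: "x > lstar" for x
  proof -
    define g where "g = Gfun \<gamma> n b \<pi> (e x)"
    have ns: "\<forall>i<p. a i * g - x \<noteq> 0" using e_no_sing x by (auto simp: g_def)
    have ex: "e x = (\<Sum>i<p. a i * \<omega> i / (a i * g - x))"
      using master_F x by (auto simp: Ffun_def g_def)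
    have "e x * g = (\<Sum>i<p. \<omega> i + x * (\<omega> i / (a i * g - x)))"
      unfolding ex sum_distrib_right
    proof (rule sum.cong)
      fix i assume "i \<in> {..<p}"
      then have "a i * g - x \<noteq> 0" using ns by auto
      then show "a i * \<omega> i / (a i * g - x) * g = \<omega> i + x * (\<omega> i / (a i * g - x))"
        by (simp add: field_simps)
    qed simp
    also have "\<dots> = 1 + x * stieltjes \<mu> x"
      using master_s x by (simp add: sum.distrib \<omega>_sum sum_distrib_left g_def)
    finally show ?thesis by (simp add: g_def)
  qed
  have dnonneg: "deriv e x \<ge> 0" if x: "x > lstar" for x
  proof -
    define D where "D = (\<Sum>j<n. b j * \<pi> j / (1 + \<gamma> * b j * e x)^2)"
    have Dpos: "D > 0" unfolding D_def
    proof (rule sum_pos)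
      fix j assume "j \<in> {..<n}"
      then show "0 < b j * \<pi> j / (1 + \<gamma> * b j * e x)^2"
        using b_pos \<pi>_pos nopole[OF x] by auto
    qed (use n0 in auto)
    have hd: "((\<lambda>y. e y * Gfun \<gamma> n b \<pi> (e y)) has_real_derivative D * deriv e x) (at x)"
      using DERIV_chain2[OF phi_deriv[OF nopole[OF x]] e_diff[OF x]] by (simp add: D_def)
    have "D * deriv e x \<ge> 0"
    proof (rule deriv_nonneg_of_right_mono[OF hd])
      fix y assume "y > x"
      then show "e x * Gfun \<gamma> n b \<pi> (e x) \<le> e y * Gfun \<gamma> n b \<pi> (e y)"
        using ident[OF x] ident[of y] wmono[OF x, of y] x by simp
    qed
    then show ?thesis using Dpos by (simp add: zero_le_mult_iff)
  qed
  have dnz: "deriv e x \<noteq> 0" if x: "x > lstar" for x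
  proof
    assume d0: "deriv e x = 0"
    obtain G' where G': "(Gfun \<gamma> n b \<pi> has_real_derivative G') (at (e x))"
      using Gfun_deriv[OF nopole[OF x]] by (auto simp: real_differentiable_def)
    have gd: "((\<lambda>y. Gfun \<gamma> n b \<pi> (e y)) has_real_derivative 0) (at x)"
      using DERIV_chain2[OF G' e_diff[OF x]] d0 by simp
    define u where "u i = a i * Gfun \<gamma> n b \<pi> (e x) - x" for i
    have unz: "u i \<noteq> 0" if "i < p" for i using e_no_sing x that by (auto simp: u_def)
    define K where "K = 0 - (\<Sum>i<p. a i * \<omega> i / (u i)^2)"
    have kd: "((\<lambda>y. e y - (\<Sum>i<p. a i * \<omega> i / (a i * Gfun \<gamma> n b \<pi> (e y) - y))) has_real_derivative K) (at x)"
      unfolding K_def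
    proof (rule DERIV_diff)
      show "(e has_real_derivative 0) (at x)" using e_diff[OF x] d0 by simp
      show "((\<lambda>y. \<Sum>i<p. a i * \<omega> i / (a i * Gfun \<gamma> n b \<pi> (e y) - y)) has_real_derivative (\<Sum>i<p. a i * \<omega> i / (u i)^2)) (at x)"
      proof (rule DERIV_sum)
        fix i assume i: "i \<in> {..<p}"
        have vd: "((\<lambda>y. a i * Gfun \<gamma> n b \<pi> (e y) - y) has_real_derivative a i * 0 - 1) (at x)"
          by (intro DERIV_diff DERIV_cmult gd DERIV_ident)
        have "((\<lambda>y. a i * \<omega> i / (a i * Gfun \<gamma> n b \<pi> (e y) - y)) has_real_derivative
            (0 * u i - a i * \<omega> i * (a i * 0 - 1)) / (u i * u i)) (at x)"
          using DERIV_divide[OF DERIV_const vd] unz i by (simp add: u_def)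
        then show "((\<lambda>y. a i * \<omega> i / (a i * Gfun \<gamma> n b \<pi> (e y) - y)) has_real_derivative a i * \<omega> i / (u i)^2) (at x)"
          by (simp add: power2_eq_square)
      qed
    qed
    have "((\<lambda>y. e y - (\<Sum>i<p. a i * \<omega> i / (a i * Gfun \<gamma> n b \<pi> (e y) - y))) has_real_derivative 0) (at x)"
    proof (rule has_field_derivative_transform_within_open[of "\<lambda>_. 0" 0 x "{lstar<..}"])
      fix y :: real assume "y \<in> {lstar<..}"
      then show "0 = e y - (\<Sum>i<p. a i * \<omega> i / (a i * Gfun \<gamma> n b \<pi> (e y) - y))"
        using master_F by (auto simp: Ffun_def)
    qed (use x in auto)
    then have "K = 0" using kd DERIV_unique by blast
    moreover have "(\<Sum>i<p. a i * \<omega> i / (u i)^2) > 0"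
    proof (rule sum_pos)
      fix i assume "i \<in> {..<p}"
      then show "0 < a i * \<omega> i / (u i)^2" using a_pos \<omega>_pos unz by auto
    qed (use p0 in auto)
    ultimately show False by (simp add: K_def)
  qed
  have dpos: "\<forall>x>lstar. deriv e x > 0"
    using dnonneg dnz by (auto simp: less_le)
  have "strict_mono_on {lstar<..} e"
  proof (rule strict_mono_onI)
    fix r s assume rs: "r \<in> {lstar<..}" "s \<in> {lstar<..}" "r < s"
    show "e r < e s"
    proof (rule DERIV_pos_imp_increasing_open[OF rs(3)])
      fix y assume "r < y" "y < s"
      then show "\<exists>d. (e has_real_derivative d) (at y) \<and> d > 0"
        using rs e_diff[of y] dpos by (intro exI[of _ "deriv e y"]) auto
    next
      show "continuous_on {r..s} e"
      proof (intro continuous_at_imp_continuous_on ballI)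
        fix y assume "y \<in> {r..s}"
        then show "isCont e y" using rs by (intro DERIV_isCont[OF e_diff]) auto
      qed
    qed
  qed
  with dpos show ?thesis by simp
qed
end
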